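(* Let $\gamma$ be a smooth Jordan curve, fix $r\in(0,1/2)$, and let $T_n\in T_{r,\theta_n}$ ($\theta_n\in(0,\pi)$) be a sequence of isosceles trapezoids inscribed in $\gamma$ converging to a point $p\in\gamma$ (all four vertices converge to $p$). Then $p$ is a vertex of $\gamma$, i.e. the derivative of the curvature of $\gamma$ vanishes at $p$.
   Context: For $r\in(0,1/2]$, $\theta\in(0,\pi)$ and $z\neq w\in\mathbb{C}$, let $z',w'$ be obtained by rotating $z,w$ clockwise by angle $\theta$ about the point $(1-r)z+rw$. $T_{r,\theta}$ is the set of 4-point sets $\{z,w,z',w'\}\subset\mathbb{C}$ obtained this way (isosceles trapezoids of aspect ratio $r$ and angle $\theta$); such a set is inscribed in $\gamma$ if it is contained in $\gamma$. *)

theory Defs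
  imports "HOL-Analysis.Analysis"
begin

definition curve_deriv :: "(real \<Rightarrow> complex) \<Rightarrow> real \<Rightarrow> complex" where
  "curve_deriv g = (\<lambda>t. vector_derivative g (at t))"

definition nth_curve_deriv :: "nat \<Rightarrow> (real \<Rightarrow> complex) \<Rightarrow> real \<Rightarrow> complex" where
  "nth_curve_deriv n g = (curve_deriv ^^ n) g"

definition smooth_jordan_param :: "(real \<Rightarrow> complex) \<Rightarrow> bool" where
  "smooth_jordan_param g \<longleftrightarrow>
     (\<forall>n t. nth_curve_deriv n g differentiable (at t)) \<and>
     (\<forall>t. g (t + 1) = g t) \<and>
     inj_on g {0..<1} \<and>
     (\<forall>t. curve_deriv g t \<noteq> 0)"

definition curvature :: "(real \<Rightarrow> complex) \<Rightarrow> real \<Rightarrow> real" where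
  "curvature g t = Im (cnj (curve_deriv g t) * nth_curve_deriv 2 g t) / (cmod (curve_deriv g t)) ^ 3"

definition is_vertex :: "(real \<Rightarrow> complex) \<Rightarrow> complex \<Rightarrow> bool" where
  "is_vertex g p \<longleftrightarrow> (\<exists>t. g t = p \<and> (curvature g has_real_derivative 0) (at t))"

text \<open>Isosceles trapezoids \<open>T_{r,\<theta>}\<close>: \<open>z', w'\<close> are \<open>z, w\<close> rotated clockwise by \<open>\<theta>\<close>
  about \<open>(1-r) z + r w\<close>.\<close>
definition trapezoids :: "real \<Rightarrow> real \<Rightarrow> complex set set" where
  "trapezoids r \<theta> =
     {{z, w, ((1 - of_real r) * z + of_real r * w) + cis (-\<theta>) * (z - ((1 - of_real r) * z + of_real r * w)),
             ((1 - of_real r) * z + of_real r * w) + cis (-\<theta>) * (w - ((1 - of_real r) * z + of_real r * w))} | z w. z \<noteq> w}"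

end

theory Submission
  imports Defs
begin


lemma nth0: "nth_curve_deriv 0 g = g" by (simp add: nth_curve_deriv_def)
lemma nthSuc: "nth_curve_deriv (Suc k) g = curve_deriv (nth_curve_deriv k g)"
  by (simp add: nth_curve_deriv_def)
lemma nth1: "nth_curve_deriv 1 g = curve_deriv g" by (simp add: nth_curve_deriv_def)

lemma nth_vd:
  assumes "smooth_jordan_param g"
  shows "(nth_curve_deriv k g has_vector_derivative nth_curve_deriv (Suc k) g t) (at t)"
proof -
  have "nth_curve_deriv k g differentiable (at t)" using assms by (simp add: smooth_jordan_param_def)
  then show ?thesis by (simp add: nthSuc curve_deriv_def vector_derivative_works)
qed

lemma dRe:
  assumes "(u has_vector_derivative u') (at t)" "(v has_vector_derivative v') (at t)"
  shows "((\<lambda>s. Re (cnj (u s) * v s)) has_real_derivative Re (cnj (u t) * v' + cnj u' * v t)) (at t)"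
proof -
  have "((\<lambda>s. cnj (u s) * v s) has_vector_derivative (cnj (u t) * v' + cnj u' * v t)) (at t)"
    by (intro has_vector_derivative_mult has_vector_derivative_cnj assms)
  from bounded_linear.has_vector_derivative[OF bounded_linear_Re this]
  show ?thesis by (simp add: has_real_derivative_iff_has_vector_derivative)
qed

lemma dIm:
  assumes "(u has_vector_derivative u') (at t)" "(v has_vector_derivative v') (at t)"
  shows "((\<lambda>s. Im (cnj (u s) * v s)) has_real_derivative Im (cnj (u t) * v' + cnj u' * v t)) (at t)"
proof -
  have "((\<lambda>s. cnj (u s) * v s) has_vector_derivative (cnj (u t) * v' + cnj u' * v t)) (at t)"
    by (intro has_vector_derivative_mult has_vector_derivative_cnj assms)
  from bounded_linear.has_vector_derivative[OF bounded_linear_Im this]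
  show ?thesis by (simp add: has_real_derivative_iff_has_vector_derivative)
qed

lemma Re_cnj_sym: "Re (cnj a * b) = Re (cnj b * a)" by simp

definition G :: "(real \<Rightarrow> complex) \<Rightarrow> nat \<Rightarrow> real \<Rightarrow> complex" where
  "G g k s = nth_curve_deriv k g s"

definition phi0 :: "(real \<Rightarrow> complex) \<Rightarrow> real \<times> complex \<times> real \<Rightarrow> real \<Rightarrow> real" where
  "phi0 g x s = fst x * Re (cnj (G g 0 s) * G g 0 s) + Re (cnj (fst (snd x)) * G g 0 s) + snd (snd x)"
definition phi1 :: "(real \<Rightarrow> complex) \<Rightarrow> real \<times> complex \<times> real \<Rightarrow> real \<Rightarrow> real" where
  "phi1 g x s = fst x * (2 * Re (cnj (G g 0 s) * G g 1 s)) + Re (cnj (fst (snd x)) * G g 1 s)"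
definition phi2 :: "(real \<Rightarrow> complex) \<Rightarrow> real \<times> complex \<times> real \<Rightarrow> real \<Rightarrow> real" where
  "phi2 g x s = fst x * (2 * (Re (cnj (G g 1 s) * G g 1 s) + Re (cnj (G g 0 s) * G g 2 s))) + Re (cnj (fst (snd x)) * G g 2 s)"
definition phi3 :: "(real \<Rightarrow> complex) \<Rightarrow> real \<times> complex \<times> real \<Rightarrow> real \<Rightarrow> real" where
  "phi3 g x s = fst x * (2 * (3 * Re (cnj (G g 1 s) * G g 2 s) + Re (cnj (G g 0 s) * G g 3 s))) + Re (cnj (fst (snd x)) * G g 3 s)"

lemma G_vd: "smooth_jordan_param g \<Longrightarrow> (G g k has_vector_derivative G g (Suc k) t) (at t)"
  unfolding G_def by (rule nth_vd)

lemma G_vds: assumes "smooth_jordan_param g"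
  shows "(G g 0 has_vector_derivative G g 1 t) (at t)" "(G g 1 has_vector_derivative G g 2 t) (at t)"
    "(G g 2 has_vector_derivative G g 3 t) (at t)"
  using G_vd[OF assms, of 0 t] G_vd[OF assms, of 1 t] G_vd[OF assms, of 2 t] by (simp_all add: numeral_eq_Suc)

lemma const_vd: "((\<lambda>s. B) has_vector_derivative 0) (at t)"
  by (rule has_vector_derivative_const)

lemma dphi0: assumes "smooth_jordan_param g"
  shows "(phi0 g x has_real_derivative phi1 g x t) (at t)"
proof -
  note d = G_vds[OF assms]
  have "((\<lambda>s. fst x * Re (cnj (G g 0 s) * G g 0 s) + Re (cnj (fst (snd x)) * G g 0 s) + snd (snd x))
     has_real_derivative fst x * Re (cnj (G g 0 t) * G g 1 t + cnj (G g 1 t) * G g 0 t) + Re (cnj (fst (snd x)) * G g 1 t + cnj 0 * G g 0 t) + 0) (at t)"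
    by (intro DERIV_add DERIV_cmult dRe d const_vd DERIV_const)
  then show ?thesis unfolding phi0_def[abs_def] phi1_def
    by (rule DERIV_cong) (simp add: algebra_simps)
qed

lemma dphi1: assumes "smooth_jordan_param g"
  shows "(phi1 g x has_real_derivative phi2 g x t) (at t)"
proof -
  note d = G_vds[OF assms]
  have "((\<lambda>s. fst x * (2 * Re (cnj (G g 0 s) * G g 1 s)) + Re (cnj (fst (snd x)) * G g 1 s))
     has_real_derivative fst x * (2 * Re (cnj (G g 0 t) * G g 2 t + cnj (G g 1 t) * G g 1 t)) + Re (cnj (fst (snd x)) * G g 2 t + cnj 0 * G g 1 t)) (at t)"
    by (intro DERIV_add DERIV_cmult dRe d const_vd DERIV_const)
  then show ?thesis unfolding phi1_def[abs_def] phi2_def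
    by (rule DERIV_cong) (simp add: algebra_simps)
qed

lemma dphi2: assumes "smooth_jordan_param g"
  shows "(phi2 g x has_real_derivative phi3 g x t) (at t)"
proof -
  note d = G_vds[OF assms]
  have "((\<lambda>s. fst x * (2 * (Re (cnj (G g 1 s) * G g 1 s) + Re (cnj (G g 0 s) * G g 2 s))) + Re (cnj (fst (snd x)) * G g 2 s))
     has_real_derivative fst x * (2 * (Re (cnj (G g 1 t) * G g 2 t + cnj (G g 2 t) * G g 1 t) + Re (cnj (G g 0 t) * G g 3 t + cnj (G g 1 t) * G g 2 t))) + Re (cnj (fst (snd x)) * G g 3 t + cnj 0 * G g 2 t)) (at t)"
    by (intro DERIV_add DERIV_cmult dRe d const_vd DERIV_const)
  then show ?thesis unfolding phi2_def[abs_def] phi3_def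
    by (rule DERIV_cong) (simp add: algebra_simps)
qed



lemma rolle_set:
  fixes f f' :: "real \<Rightarrow> real"
  assumes d: "\<And>x. (f has_real_derivative f' x) (at x)"
  shows "finite S \<Longrightarrow> card S = Suc m \<Longrightarrow> (\<forall>x\<in>S. f x = 0) \<Longrightarrow>
    \<exists>S'. finite S' \<and> card S' = m \<and> (\<forall>x\<in>S'. f' x = 0) \<and> (\<forall>x\<in>S'. Min S \<le> x \<and> x \<le> Max S)"
proof (induction m arbitrary: S)
  case 0
  then show ?case by (intro exI[of _ "{}"]) auto
next
  case (Suc m)
  define M where "M = Max S"
  define S0 where "S0 = S - {M}"
  have ne: "S \<noteq> {}" using Suc.prems by auto
  have MS: "M \<in> S" using Suc.prems ne by (simp add: M_def)
  have fS0: "finite S0" and cS0: "card S0 = Suc m" using Suc.prems MS by (auto simp: S0_def)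
  have z0: "\<forall>x\<in>S0. f x = 0" using Suc.prems by (auto simp: S0_def)
  have ne0: "S0 \<noteq> {}" using cS0 by auto
  define M0 where "M0 = Max S0"
  have M0S0: "M0 \<in> S0" using fS0 ne0 by (simp add: M0_def)
  have M0M: "M0 < M"
  proof -
    have "M0 \<le> M" using M0S0 Suc.prems by (auto simp: S0_def M_def)
    moreover have "M0 \<noteq> M" using M0S0 by (auto simp: S0_def)
    ultimately show ?thesis by simp
  qed
  obtain S0' where S0': "finite S0'" "card S0' = m" "\<forall>x\<in>S0'. f' x = 0"
     "\<forall>x\<in>S0'. Min S0 \<le> x \<and> x \<le> Max S0"
    using Suc.IH[OF fS0 cS0 z0] by blast
  have fM0: "f M0 = 0" "f M = 0" using z0 M0S0 Suc.prems MS by auto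
  have cont: "continuous_on {M0..M} f"
    using d by (meson DERIV_continuous continuous_at_imp_continuous_on)
  obtain y where y: "M0 < y" "y < M" "DERIV f y :> 0"
    using Rolle[OF M0M _ cont] fM0 d real_differentiable_def by (metis)
  have fy: "f' y = 0" using DERIV_unique[OF d[of y] y(3)] .
  have yn: "y \<notin> S0'" using S0'(4) y(1) M0_def by fastforce
  have minle: "Min S \<le> Min S0" using Suc.prems ne0 by (auto simp: S0_def intro!: Min_antimono)
  have minM0: "Min S0 \<le> M0" using fS0 ne0 M0S0 by simp
  show ?case
  proof (intro exI[of _ "insert y S0'"] conjI)
    show "finite (insert y S0')" using S0' by simp
    show "card (insert y S0') = Suc m" using S0' yn by simp
    show "\<forall>x\<in>insert y S0'. f' x = 0" using S0' fy by simp
    show "\<forall>x\<in>insert y S0'. Min S \<le> x \<and> x \<le> Max S"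
      using S0'(4) y minle minM0 M0M unfolding M_def[symmetric] M0_def[symmetric] by fastforce
  qed
qed



lemma g_cont: "smooth_jordan_param g \<Longrightarrow> isCont g t"
proof -
  assume "smooth_jordan_param g"
  then have "nth_curve_deriv 0 g differentiable (at t)" by (simp add: smooth_jordan_param_def)
  then have "g differentiable (at t)" by (simp add: nth_curve_deriv_def)
  then show ?thesis by (rule differentiable_imp_continuous_within)
qed

lemma period_nat: "smooth_jordan_param g \<Longrightarrow> g (t + real n) = g t"
proof (induction n arbitrary: t)
  case 0 then show ?case by simp
next
  case (Suc n)
  have "g (t + real (Suc n)) = g ((t + real n) + 1)" by (simp add: algebra_simps)
  also have "\<dots> = g (t + real n)" using Suc.prems by (simp add: smooth_jordan_param_def)
  finally show ?case using Suc by simp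
qed

lemma period_int: assumes "smooth_jordan_param g" shows "g (t + real_of_int k) = g t"
proof (cases k rule: int_cases)
  case (nonneg n)
  then show ?thesis using period_nat[OF assms, of t n] by simp
next
  case (neg n)
  have "g t = g ((t - real (Suc n)) + real (Suc n))" by simp
  also have "\<dots> = g (t - real (Suc n))" by (rule period_nat[OF assms])
  moreover have "t + real_of_int k = t - real (Suc n)" using neg by simp
  ultimately show ?thesis by metis
qed

lemma inj_close:
  assumes "smooth_jordan_param g" "g a = g b" "\<bar>a - b\<bar> < 1"
  shows "a = b"
proof -
  define a' where "a' = a - of_int \<lfloor>a\<rfloor>"
  define b' where "b' = b - of_int \<lfloor>b\<rfloor>"
  have "g a' = g a" using period_int[OF assms(1), of a' "\<lfloor>a\<rfloor>"] by (simp add: a'_def)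
  moreover have "g b' = g b" using period_int[OF assms(1), of b' "\<lfloor>b\<rfloor>"] by (simp add: b'_def)
  moreover have "a' \<in> {0..<1}" "b' \<in> {0..<1}" unfolding a'_def b'_def by (auto simp: floor_less_cancel)
  ultimately have "a' = b'" using assms(1,2) by (auto simp: smooth_jordan_param_def inj_on_def)
  then have "a - b = of_int (\<lfloor>a\<rfloor> - \<lfloor>b\<rfloor>)" by (simp add: a'_def b'_def)
  then have "\<bar>of_int (\<lfloor>a\<rfloor> - \<lfloor>b\<rfloor>)\<bar> < (1::real)" using assms(3) by simp
  then have "\<bar>\<lfloor>a\<rfloor> - \<lfloor>b\<rfloor>\<bar> < 1" by (metis of_int_abs of_int_less_1_iff)
  then have "\<lfloor>a\<rfloor> - \<lfloor>b\<rfloor> = 0" by simp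
  with \<open>a - b = _\<close> show ?thesis by simp
qed

lemma shift_near: assumes "smooth_jordan_param g"
  shows "\<exists>s. g s = g t \<and> \<bar>s - t0\<bar> \<le> 1/2"
proof -
  define k where "k = \<lfloor>t - t0 + 1/2\<rfloor>"
  define s where "s = t + real_of_int (- k)"
  have gs: "g s = g t" unfolding s_def by (rule period_int[OF assms])
  have k1: "of_int k \<le> t - t0 + 1/2" unfolding k_def by (rule of_int_floor_le)
  have k2: "t - t0 + 1/2 < of_int k + 1" unfolding k_def by (rule real_of_int_floor_add_one_gt)
  have "\<bar>s - t0\<bar> \<le> 1/2" unfolding s_def abs_le_iff of_int_minus using k1 k2 by linarith
  then show ?thesis using gs by blast
qed

lemma param_close:
  assumes sm: "smooth_jordan_param g" and e: "e > 0"
  shows "\<exists>d>0. \<forall>t. cmod (g t - g t0) < d \<longrightarrow> (\<exists>s. g s = g t \<and> \<bar>s - t0\<bar> < e)"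
proof -
  define K where "K = {t0 - 1/2 .. t0 - e} \<union> {t0 + e .. t0 + 1/2}"
  have Kmem: "\<And>s. s \<in> K \<longleftrightarrow> (e \<le> \<bar>s - t0\<bar> \<and> \<bar>s - t0\<bar> \<le> 1/2)"
  proof -
    fix s
    show "s \<in> K \<longleftrightarrow> (e \<le> \<bar>s - t0\<bar> \<and> \<bar>s - t0\<bar> \<le> 1/2)"
    proof (cases "s \<le> t0")
      case True
      then have a: "\<bar>s - t0\<bar> = t0 - s" by simp
      show ?thesis unfolding K_def a using e True by auto
    next
      case False
      then have a: "\<bar>s - t0\<bar> = s - t0" by simp
      show ?thesis unfolding K_def a using e False by auto
    qed
  qed
  have cK: "compact K" unfolding K_def by (intro compact_Un compact_Icc)
  have contK: "continuous_on K (\<lambda>s. cmod (g s - g t0))"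
  proof (intro continuous_at_imp_continuous_on ballI)
    fix x show "isCont (\<lambda>s. cmod (g s - g t0)) x"
      using g_cont[OF sm, of x] by (intro continuous_intros) auto
  qed
  have pos: "cmod (g s - g t0) > 0" if s: "s \<in> K" for s
  proof -
    have s1: "e \<le> \<bar>s - t0\<bar>" "\<bar>s - t0\<bar> \<le> 1/2" using Kmem s by auto
    have "g s \<noteq> g t0"
    proof
      assume "g s = g t0"
      moreover have "\<bar>s - t0\<bar> < 1" using s1 by simp
      ultimately have "s = t0" by (rule inj_close[OF sm])
      then show False using s1 e by simp
    qed
    then show ?thesis by simp
  qed
  obtain d where d: "d > 0" "\<And>s. s \<in> K \<Longrightarrow> d \<le> cmod (g s - g t0)"
  proof (cases "K = {}")
    case True then show ?thesis using that[of 1] by simp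
  next
    case False
    obtain m where m: "m \<in> K" "\<forall>y\<in>K. cmod (g m - g t0) \<le> cmod (g y - g t0)"
      using continuous_attains_inf[OF cK False contK] by blast
    show ?thesis by (rule that[of "cmod (g m - g t0)"]) (use m pos[OF m(1)] in auto)
  qed
  have "\<forall>t. cmod (g t - g t0) < d \<longrightarrow> (\<exists>s. g s = g t \<and> \<bar>s - t0\<bar> < e)"
  proof (intro allI impI)
    fix t assume t: "cmod (g t - g t0) < d"
    obtain s where s: "g s = g t" "\<bar>s - t0\<bar> \<le> 1/2" using shift_near[OF sm] by blast
    have "\<bar>s - t0\<bar> < e"
    proof (rule ccontr)
      assume "\<not> \<bar>s - t0\<bar> < e"
      then have "s \<in> K" using s(2) Kmem by simp
      then show False using d(2)[of s] s(1) t by simp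
    qed
    then show "\<exists>s. g s = g t \<and> \<bar>s - t0\<bar> < e" using s by blast
  qed
  then show ?thesis using d(1) by blast
qed



lemma circ_form:
  "cmod (y - c)^2 - 2 * Re (cnj D * (y - c)) - K =
   Re (cnj y * y) + Re (cnj (-2 * (c + D)) * y) + (Re (cnj c * c) + 2 * Re (cnj D * c) - K)"
  unfolding cmod_power2 by (simp add: algebra_simps power2_eq_square)

lemma circ_scaled:
  "cmod (x * v)^2 - 2 * Re (cnj (oc * v) * (x * v)) - K * cmod v ^2 =
   cmod v ^ 2 * (cmod x ^2 - 2 * Re (cnj oc * x) - K)"
  unfolding cmod_power2 by (simp add: algebra_simps power2_eq_square)

lemma unit_val:
  fixes a m :: real and oc u :: complex
  assumes "Re (cnj oc * u) = m" "cmod u = 1"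
  shows "cmod (of_real a * u) ^ 2 - 2 * Re (cnj oc * (of_real a * u)) = a^2 - 2 * a * m"
proof -
  have "cmod (of_real a * u) ^ 2 = a^2" using assms(2) by (simp add: norm_mult power_mult_distrib)
  moreover have "Re (cnj oc * (of_real a * u)) = a * Re (cnj oc * u)"
    by (simp add: algebra_simps)
  ultimately show ?thesis using assms(1) by simp
qed

lemma trap_circle:
  fixes r \<theta> :: real and z w :: complex
  assumes r: "0 < r" "r < 1/2" and th: "0 < \<theta>" "\<theta> < pi"
  defines "c \<equiv> (1 - of_real r) * z + of_real r * w"
  shows "\<exists>B C. \<forall>y \<in> {z, w, c + cis (-\<theta>) * (z - c), c + cis (-\<theta>) * (w - c)}.
           Re (cnj y * y) + Re (cnj B * y) + C = 0"
proof -
  define v where "v = z - w"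
  define m where "m = (2*r - 1) / 2"
  define oc where "oc = Complex m (m * (cos \<theta> - 1) / sin \<theta>)"
  define \<rho> where "\<rho> = cis (-\<theta>)"
  define K where "K = r * (1 - r)"
  have sn: "sin \<theta> \<noteq> 0" using sin_gt_zero[OF th] by simp
  have o1: "Re (cnj oc * 1) = m" by (simp add: oc_def)
  have o2: "Re (cnj oc * \<rho>) = m" using sn by (simp add: oc_def \<rho>_def cis.ctr field_simps)
  have u1: "cmod (1::complex) = 1" by simp
  have u2: "cmod \<rho> = 1" by (simp add: \<rho>_def)
  have hval: "cmod (of_real a * u) ^ 2 - 2 * Re (cnj oc * (of_real a * u)) - K = 0"
    if "u = 1 \<or> u = \<rho>" "a = r \<or> a = -(1 - r)" for a u
  proof -
    have "Re (cnj oc * u) = m" "cmod u = 1" using that(1) o1 o2 u2 by auto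
    then have "cmod (of_real a * u) ^ 2 - 2 * Re (cnj oc * (of_real a * u)) = a^2 - 2 * a * m"
      by (rule unit_val)
    moreover have "a^2 - 2 * a * m - K = 0" using that(2) by (auto simp: m_def K_def power2_eq_square field_simps)
    ultimately show ?thesis by simp
  qed
  define F where "F y = cmod (y - c)^2 - 2 * Re (cnj (oc * v) * (y - c)) - K * cmod v ^2" for y
  have Fz: "F (c + x * v) = 0" if "x = of_real a * u" "u = 1 \<or> u = \<rho>" "a = r \<or> a = -(1 - r)" for x a u
  proof -
    have xv: "(c + x * v) - c = x * v" by simp
    have "F (c + x * v) = cmod v ^ 2 * (cmod x ^2 - 2 * Re (cnj oc * x) - K)"
      unfolding F_def xv by (rule circ_scaled)
    then show ?thesis using hval[OF that(2,3)] that(1) by simp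
  qed
  have pz: "z = c + (of_real r * 1) * v" by (simp add: c_def v_def algebra_simps)
  have pw: "w = c + (of_real (-(1-r)) * 1) * v" by (simp add: c_def v_def algebra_simps)
  have pz': "c + cis (-\<theta>) * (z - c) = c + (of_real r * \<rho>) * v" by (simp add: \<rho>_def c_def v_def algebra_simps)
  have pw': "c + cis (-\<theta>) * (w - c) = c + (of_real (-(1-r)) * \<rho>) * v" by (simp add: \<rho>_def c_def v_def algebra_simps)
  have f1: "F z = 0" unfolding pz by (rule Fz[OF refl]) auto
  have f2: "F w = 0" unfolding pw by (rule Fz[OF refl]) auto
  have f3: "F (c + cis (-\<theta>) * (z - c)) = 0" unfolding pz' by (rule Fz[OF refl]) auto
  have f4: "F (c + cis (-\<theta>) * (w - c)) = 0" unfolding pw' by (rule Fz[OF refl]) auto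
  have allF: "\<forall>y \<in> {z, w, c + cis (-\<theta>) * (z - c), c + cis (-\<theta>) * (w - c)}. F y = 0"
    using f1 f2 f3 f4 by blast
  show ?thesis
    apply (rule exI[of _ "-2 * (c + oc * v)"], rule exI[of _ "Re (cnj c * c) + 2 * Re (cnj (oc * v) * c) - K * cmod v ^2"])
    using allF unfolding F_def circ_form by simp
qed

lemma trap_card:
  fixes r \<theta> :: real and z w :: complex
  assumes r: "0 < r" "r < 1/2" and th: "0 < \<theta>" "\<theta> < pi" and zw: "z \<noteq> w"
  defines "c \<equiv> (1 - of_real r) * z + of_real r * w"
  shows "card {z, w, c + cis (-\<theta>) * (z - c), c + cis (-\<theta>) * (w - c)} = 4"
proof -
  define v where "v = z - w"
  define \<rho> where "\<rho> = cis (-\<theta>)"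
  have v0: "v \<noteq> 0" using zw by (simp add: v_def)
  have r1: "\<rho> \<noteq> 1"
  proof
    assume "\<rho> = 1"
    then have "Im \<rho> = 0" by simp
    then show False using sin_gt_zero[OF th] by (simp add: \<rho>_def)
  qed
  have n\<rho>: "cmod \<rho> = 1" by (simp add: \<rho>_def)
  have e1: "z - c = of_real r * v" by (simp add: c_def v_def algebra_simps)
  have e2: "w - c = - of_real (1 - r) * v" by (simp add: c_def v_def algebra_simps)
  have nv: "cmod v > 0" using v0 by simp
  have n1: "cmod (z - c) = r * cmod v" unfolding e1 norm_mult norm_of_real using r by simp
  have n2: "cmod (w - c) = (1 - r) * cmod v" unfolding e2 mult_minus_left norm_minus_cancel norm_mult norm_of_real using r by simp
  have d1: "z \<noteq> c + \<rho> * (z - c)"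
  proof
    assume "z = c + \<rho> * (z - c)"
    then have "z - c = \<rho> * (z - c)" by (metis add_diff_cancel_left')
    then have "(1 - \<rho>) * (of_real r * v) = 0" using e1 by (simp add: algebra_simps)
    then show False using r1 v0 r by simp
  qed
  have d2: "w \<noteq> c + \<rho> * (w - c)"
  proof
    assume "w = c + \<rho> * (w - c)"
    then have "w - c = \<rho> * (w - c)" by (metis add_diff_cancel_left')
    then have "(1 - \<rho>) * (of_real (1 - r) * v) = 0" using e2 by (simp add: algebra_simps)
    then show False using r1 v0 r by simp
  qed
  have d3: "z \<noteq> c + \<rho> * (w - c)"
  proof
    assume "z = c + \<rho> * (w - c)"
    then have "cmod (z - c) = cmod (\<rho> * (w - c))" by simp
    then have "r * cmod v = (1 - r) * cmod v" using n1 n2 n\<rho> by (simp add: norm_mult)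
    then show False using nv r by simp
  qed
  have d4: "w \<noteq> c + \<rho> * (z - c)"
  proof
    assume "w = c + \<rho> * (z - c)"
    then have "cmod (w - c) = cmod (\<rho> * (z - c))" by simp
    then have "(1 - r) * cmod v = r * cmod v" using n1 n2 n\<rho> by (simp add: norm_mult)
    then show False using nv r by simp
  qed
  have d5: "c + \<rho> * (z - c) \<noteq> c + \<rho> * (w - c)"
  proof
    assume "c + \<rho> * (z - c) = c + \<rho> * (w - c)"
    then have "z = w" using r1 using n\<rho> by (metis add_left_cancel cancel_comm_monoid_add_class.diff_cancel diff_add_cancel mult_cancel_left norm_zero zero_neq_one)
    then show False using zw by simp
  qed
  show ?thesis using zw d1 d2 d3 d4 d5 unfolding \<rho>_def[symmetric] by auto
qed



lemma key_identity:
  "Re (cnj a * a) * Re (cnj V * w) = Re (cnj V * a) * Re (cnj a * w) + Im (cnj a * V) * Im (cnj a * w)"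
  by (simp add: algebra_simps)

lemma alg_core:
  fixes A C :: real and B p a b d :: complex
  assumes E0: "A * Re (cnj p * p) + Re (cnj B * p) + C = 0"
    and E1: "A * (2 * Re (cnj p * a)) + Re (cnj B * a) = 0"
    and E2: "A * (2 * (Re (cnj a * a) + Re (cnj p * b))) + Re (cnj B * b) = 0"
    and E3: "A * (2 * (3 * Re (cnj a * b) + Re (cnj p * d))) + Re (cnj B * d) = 0"
    and a0: "a \<noteq> 0" and nz: "A \<noteq> 0 \<or> B \<noteq> 0 \<or> C \<noteq> 0"
  shows "Im (cnj a * d) * Re (cnj a * a) - 3 * Im (cnj a * b) * Re (cnj a * b) = 0"
proof -
  define V where "V = 2 * of_real A * p + B"
  define N where "N = Re (cnj a * a)"
  define \<sigma> where "\<sigma> = Im (cnj a * V)"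
  define X where "X = Im (cnj a * b)"
  define Y where "Y = Re (cnj a * b)"
  define Z where "Z = Im (cnj a * d)"
  have Npos: "N > 0" using a0 unfolding N_def by (simp add: complex_neq_0 power2_eq_square[symmetric] add_pos_nonneg)
  have V1: "Re (cnj V * a) = 0" using E1 by (simp add: V_def algebra_simps)
  have V2: "2 * A * N + Re (cnj V * b) = 0" using E2 by (simp add: V_def N_def algebra_simps)
  have V3: "6 * A * Y + Re (cnj V * d) = 0" using E3 by (simp add: V_def Y_def algebra_simps)
  have I2: "N * Re (cnj V * b) = \<sigma> * X" using key_identity[of a V b] V1 by (simp add: N_def \<sigma>_def X_def)
  have I3: "N * Re (cnj V * d) = \<sigma> * Z" using key_identity[of a V d] V1 by (simp add: N_def \<sigma>_def Z_def)
  have W2: "2 * A * N * N + \<sigma> * X = 0"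
  proof -
    have "N * (2 * A * N + Re (cnj V * b)) = 0" using V2 by simp
    then show ?thesis using I2 by (simp add: algebra_simps)
  qed
  have W3: "6 * A * Y * N + \<sigma> * Z = 0"
  proof -
    have "N * (6 * A * Y + Re (cnj V * d)) = 0" using V3 by simp
    then show ?thesis using I3 by (simp add: algebra_simps)
  qed
  have s0: "\<sigma> \<noteq> 0"
  proof
    assume s: "\<sigma> = 0"
    then have "A * N * N = 0" using W2 by simp
    then have A0: "A = 0" using Npos by simp
    have "cnj a * V = 0" using s V1 unfolding \<sigma>_def by (simp add: complex_eq_iff algebra_simps)
    then have "V = 0" using a0 by simp
    then have B0: "B = 0" using A0 by (simp add: V_def)
    then have "C = 0" using E0 A0 by simp
    then show False using nz A0 B0 by simp
  qed
  have "\<sigma> * (Z * N - 3 * X * Y) = N * (\<sigma> * Z) - 3 * Y * (\<sigma> * X)" by (simp add: algebra_simps)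
  also have "\<dots> = N * (- 6 * A * Y * N) - 3 * Y * (- 2 * A * N * N)"
  proof -
    have hz: "\<sigma> * Z = - 6 * A * Y * N" using W3 by linarith
    have hx: "\<sigma> * X = - 2 * A * N * N" using W2 by linarith
    show ?thesis by (simp only: hz hx)
  qed
  also have "\<dots> = 0" by (simp add: algebra_simps)
  finally have "Z * N - 3 * X * Y = 0" using s0 by simp
  then show ?thesis by (simp add: Z_def N_def X_def Y_def)
qed

lemma curv_deriv:
  assumes sm: "smooth_jordan_param g"
    and eq: "Im (cnj (G g 1 t) * G g 3 t) * Re (cnj (G g 1 t) * G g 1 t) - 3 * Im (cnj (G g 1 t) * G g 2 t) * Re (cnj (G g 1 t) * G g 2 t) = 0"
  shows "(curvature g has_real_derivative 0) (at t)"
proof -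
  define N where "N s = Re (cnj (G g 1 s) * G g 1 s)" for s
  define num where "num s = Im (cnj (G g 1 s) * G g 2 s)" for s
  have cf: "curvature g = (\<lambda>s. num s / (sqrt (N s))^3)"
  proof
    fix s
    have "cmod (curve_deriv g s) = sqrt (N s)"
      unfolding N_def G_def nth1 complex_mod_sqrt_Re_mult_cnj by (simp add: mult.commute)
    then show "curvature g s = num s / (sqrt (N s))^3"
      unfolding curvature_def num_def G_def nth1 by simp
  qed
  have G1ne: "G g 1 t \<noteq> 0" using sm unfolding smooth_jordan_param_def G_def nth1 by blast
  have Npos: "N t > 0" using G1ne unfolding N_def
    by (simp add: complex_neq_0 power2_eq_square[symmetric] add_pos_nonneg)
  note d = G_vds[OF sm]
  have dnum: "(num has_real_derivative Im (cnj (G g 1 t) * G g 3 t + cnj (G g 2 t) * G g 2 t)) (at t)"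
    unfolding num_def[abs_def] by (rule dIm[OF d(2) d(3)])
  have dN: "(N has_real_derivative Re (cnj (G g 1 t) * G g 2 t + cnj (G g 2 t) * G g 1 t)) (at t)"
    unfolding N_def[abs_def] by (rule dRe[OF d(2) d(2)])
  have dsq: "((\<lambda>s. sqrt (N s)) has_real_derivative inverse (sqrt (N t)) / 2 * Re (cnj (G g 1 t) * G g 2 t + cnj (G g 2 t) * G g 1 t)) (at t)"
    by (rule DERIV_chain2[OF DERIV_real_sqrt[OF Npos] dN])
  have dpow: "((\<lambda>s. sqrt (N s) ^ 3) has_real_derivative of_nat 3 * ((inverse (sqrt (N t)) / 2 * Re (cnj (G g 1 t) * G g 2 t + cnj (G g 2 t) * G g 1 t)) * sqrt (N t) ^ (3 - Suc 0))) (at t)"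
    by (rule DERIV_power[OF dsq])
  have den0: "sqrt (N t) ^ 3 \<noteq> 0" using Npos by simp
  show ?thesis unfolding cf
  proof (rule DERIV_cong[OF DERIV_divide[OF dnum dpow den0]])
    define q where "q = sqrt (N t)"
    define X where "X = Im (cnj (G g 1 t) * G g 2 t)"
    define Y where "Y = Re (cnj (G g 1 t) * G g 2 t)"
    define Z where "Z = Im (cnj (G g 1 t) * G g 3 t)"
    have q0: "q > 0" using Npos by (simp add: q_def)
    have qN: "q^2 = N t" using Npos by (simp add: q_def)
    have e1: "Im (cnj (G g 1 t) * G g 3 t + cnj (G g 2 t) * G g 2 t) = Z" by (simp add: Z_def)
    have e2: "Re (cnj (G g 1 t) * G g 2 t + cnj (G g 2 t) * G g 1 t) = 2 * Y" by (simp add: Y_def)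
    have eq': "Z * N t - 3 * X * Y = 0" using eq by (simp add: Z_def X_def Y_def N_def)
    have "Z * q ^ 3 - X * (of_nat 3 * (inverse q / 2 * (2 * Y) * q ^ (3 - Suc 0))) = q * (Z * q^2 - 3 * X * Y)"
      using q0 by (simp add: field_simps power2_eq_square power3_eq_cube)
    also have "\<dots> = 0" using eq' qN by simp
    finally have "Z * q ^ 3 - X * (of_nat 3 * (inverse q / 2 * (2 * Y) * q ^ (3 - Suc 0))) = 0" .
    then show "(Im (cnj (G g 1 t) * G g 3 t + cnj (G g 2 t) * G g 2 t) * sqrt (N t) ^ 3 -
     num t * (of_nat 3 * (inverse (sqrt (N t)) / 2 * Re (cnj (G g 1 t) * G g 2 t + cnj (G g 2 t) * G g 1 t) * sqrt (N t) ^ (3 - Suc 0)))) /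
    (sqrt (N t) ^ 3 * sqrt (N t) ^ 3) = 0"
      unfolding e1 e2 q_def[symmetric] num_def X_def[symmetric] by simp
  qed
qed



lemma phi_scale:
  "phi0 g (c *\<^sub>R x) s = c * phi0 g x s" "phi1 g (c *\<^sub>R x) s = c * phi1 g x s"
  "phi2 g (c *\<^sub>R x) s = c * phi2 g x s" "phi3 g (c *\<^sub>R x) s = c * phi3 g x s"
  unfolding phi0_def phi1_def phi2_def phi3_def by (simp_all add: algebra_simps scaleR_conv_of_real)

lemma approx_claim:
  assumes sm: "smooth_jordan_param g"
    and r: "0 < r" "r < 1/2"
    and th: "\<And>n. 0 < \<theta> n \<and> \<theta> n < pi"
    and Tt: "\<And>n. T n \<in> trapezoids r (\<theta> n)"
    and Tg: "\<And>n. T n \<subseteq> g ` {0..1}"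
    and conv: "\<And>e. e > 0 \<Longrightarrow> \<forall>\<^sub>F n in sequentially. T n \<subseteq> ball (g t0) e"
    and e: "e > 0"
  shows "\<exists>x \<xi>0 \<xi>1 \<xi>2 \<xi>3. norm x = 1 \<and> \<bar>\<xi>0 - t0\<bar> < e \<and> \<bar>\<xi>1 - t0\<bar> < e \<and> \<bar>\<xi>2 - t0\<bar> < e \<and> \<bar>\<xi>3 - t0\<bar> < e
     \<and> phi0 g x \<xi>0 = 0 \<and> phi1 g x \<xi>1 = 0 \<and> phi2 g x \<xi>2 = 0 \<and> phi3 g x \<xi>3 = 0"
proof -
  obtain d where d: "d > 0" "\<And>t. cmod (g t - g t0) < d \<Longrightarrow> \<exists>s. g s = g t \<and> \<bar>s - t0\<bar> < e"
    using param_close[OF sm e, of t0] by blast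
  obtain n where n: "T n \<subseteq> ball (g t0) d"
    using conv[OF d(1)] unfolding eventually_sequentially by blast
  obtain z w where zw: "z \<noteq> w" and Tn: "T n = {z, w,
      ((1 - of_real r) * z + of_real r * w) + cis (-\<theta> n) * (z - ((1 - of_real r) * z + of_real r * w)),
      ((1 - of_real r) * z + of_real r * w) + cis (-\<theta> n) * (w - ((1 - of_real r) * z + of_real r * w))}"
    using Tt[of n] unfolding trapezoids_def by blast
  obtain B C where BC: "\<forall>y \<in> T n. Re (cnj y * y) + Re (cnj B * y) + C = 0"
    using trap_circle[OF r, of "\<theta> n" z w] th[of n] unfolding Tn by blast
  have cardT: "card (T n) = 4"
    using trap_card[OF r _ _ zw, of "\<theta> n"] th[of n] unfolding Tn by blast
  have "\<forall>y\<in>T n. \<exists>s. g s = y \<and> \<bar>s - t0\<bar> < e"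
  proof
    fix y assume y: "y \<in> T n"
    then obtain t where t: "y = g t" using Tg[of n] by blast
    have "cmod (g t - g t0) < d" using n y t by (auto simp: dist_norm norm_minus_commute)
    then show "\<exists>s. g s = y \<and> \<bar>s - t0\<bar> < e" using d(2) t by blast
  qed
  then obtain sf where sf: "\<And>y. y \<in> T n \<Longrightarrow> g (sf y) = y \<and> \<bar>sf y - t0\<bar> < e"
    by metis
  define S where "S = sf ` T n"
  have injsf: "inj_on sf (T n)" by (metis inj_onI sf)
  have finT: "finite (T n)" unfolding Tn by simp
  have finS: "finite S" and cardS: "card S = Suc 3"
    using card_image[OF injsf] cardT finT by (auto simp: S_def)
  have Snear: "\<And>s. s \<in> S \<Longrightarrow> \<bar>s - t0\<bar> < e" using sf by (auto simp: S_def)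
  define x0 where "x0 = (1::real, B, C)"
  have x0n: "norm x0 \<noteq> 0" by (simp add: x0_def zero_prod_def)
  define x where "x = (1 / norm x0) *\<^sub>R x0"
  have xn: "norm x = 1" using x0n by (simp add: x_def)
  have z0: "\<forall>s\<in>S. phi0 g x s = 0"
  proof
    fix s assume "s \<in> S"
    then obtain y where y: "y \<in> T n" "s = sf y" by (auto simp: S_def)
    have "phi0 g x0 s = 0" using BC y sf[OF y(1)] by (simp add: phi0_def x0_def G_def nth0)
    then show "phi0 g x s = 0" by (simp add: x_def phi_scale)
  qed
  obtain S1 where S1: "finite S1" "card S1 = Suc 2" "\<forall>s\<in>S1. phi1 g x s = 0" "\<forall>s\<in>S1. Min S \<le> s \<and> s \<le> Max S"
    using rolle_set[OF dphi0[OF sm] finS cardS z0] by auto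
  obtain S2 where S2: "finite S2" "card S2 = Suc 1" "\<forall>s\<in>S2. phi2 g x s = 0" "\<forall>s\<in>S2. Min S1 \<le> s \<and> s \<le> Max S1"
    using rolle_set[OF dphi1[OF sm] S1(1,2,3)] by auto
  obtain S3 where S3: "finite S3" "card S3 = Suc 0" "\<forall>s\<in>S3. phi3 g x s = 0" "\<forall>s\<in>S3. Min S2 \<le> s \<and> s \<le> Max S2"
    using rolle_set[OF dphi2[OF sm] S2(1,2,3)] by auto
  have neS: "S \<noteq> {}" using cardS by auto
  have neS1: "S1 \<noteq> {}" using S1(2) by auto
  have neS2: "S2 \<noteq> {}" using S2(2) by auto
  have neS3: "S3 \<noteq> {}" using S3(2) by auto
  have b0: "\<bar>Min S - t0\<bar> < e" "\<bar>Max S - t0\<bar> < e" using Snear finS neS by auto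
  have inb: "\<bar>s - t0\<bar> < e" if "Min S \<le> s" "s \<le> Max S" for s using b0 that by (simp add: abs_less_iff)
  have S1near: "\<And>s. s \<in> S1 \<Longrightarrow> Min S \<le> s \<and> s \<le> Max S" using S1(4) by blast
  have S2near: "\<And>s. s \<in> S2 \<Longrightarrow> Min S \<le> s \<and> s \<le> Max S"
  proof -
    fix s assume "s \<in> S2"
    then have "Min S1 \<le> s \<and> s \<le> Max S1" using S2(4) by blast
    moreover have "Min S1 \<in> S1" "Max S1 \<in> S1" using S1(1) neS1 by auto
    ultimately show "Min S \<le> s \<and> s \<le> Max S" using S1near by fastforce
  qed
  have S3near: "\<And>s. s \<in> S3 \<Longrightarrow> Min S \<le> s \<and> s \<le> Max S"
  proof -
    fix s assume "s \<in> S3"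
    then have "Min S2 \<le> s \<and> s \<le> Max S2" using S3(4) by blast
    moreover have "Min S2 \<in> S2" "Max S2 \<in> S2" using S2(1) neS2 by auto
    ultimately show "Min S \<le> s \<and> s \<le> Max S" using S2near by fastforce
  qed
  obtain \<xi>0 where \<xi>0: "\<xi>0 \<in> S" using neS by blast
  obtain \<xi>1 where \<xi>1: "\<xi>1 \<in> S1" using neS1 by blast
  obtain \<xi>2 where \<xi>2: "\<xi>2 \<in> S2" using neS2 by blast
  obtain \<xi>3 where \<xi>3: "\<xi>3 \<in> S3" using neS3 by blast
  show ?thesis
    apply (rule exI[of _ x], rule exI[of _ \<xi>0], rule exI[of _ \<xi>1], rule exI[of _ \<xi>2], rule exI[of _ \<xi>3])
    using xn Snear[OF \<xi>0] inb S1near[OF \<xi>1] S2near[OF \<xi>2] S3near[OF \<xi>3] z0 \<xi>0 S1(3) \<xi>1 S2(3) \<xi>2 S3(3) \<xi>3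
    by blast
qed

lemma G_cont: "smooth_jordan_param g \<Longrightarrow> isCont (G g k) t"
  using G_vd[of g k t] has_vector_derivative_continuous by blast

theorem corollary3p3:
  fixes g :: "real \<Rightarrow> complex" and r :: real and \<theta> :: "nat \<Rightarrow> real"
    and T :: "nat \<Rightarrow> complex set" and p :: complex
  assumes "smooth_jordan_param g"
    and "0 < r" "r < 1/2"
    and "\<And>n. 0 < \<theta> n \<and> \<theta> n < pi"
    and "\<And>n. T n \<in> trapezoids r (\<theta> n)"
    and "\<And>n. T n \<subseteq> g ` {0..1}"
    and "p \<in> g ` {0..1}"
    and "\<And>e. e > 0 \<Longrightarrow> \<forall>\<^sub>F n in sequentially. T n \<subseteq> ball p e"
  shows "is_vertex g p"
proof -
  note sm = assms(1)
  obtain t0 where t0: "p = g t0" using assms(7) by blast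
  have Q: "\<forall>m. \<exists>y. norm (fst y) = 1 \<and> \<bar>fst (snd y) - t0\<bar> < inverse (real (Suc m))
     \<and> \<bar>fst (snd (snd y)) - t0\<bar> < inverse (real (Suc m))
     \<and> \<bar>fst (snd (snd (snd y))) - t0\<bar> < inverse (real (Suc m))
     \<and> \<bar>snd (snd (snd (snd y))) - t0\<bar> < inverse (real (Suc m))
     \<and> phi0 g (fst y) (fst (snd y)) = 0 \<and> phi1 g (fst y) (fst (snd (snd y))) = 0
     \<and> phi2 g (fst y) (fst (snd (snd (snd y)))) = 0 \<and> phi3 g (fst y) (snd (snd (snd (snd y)))) = 0"
    apply (rule allI)
    subgoal for m
      using approx_claim[OF sm assms(2,3,4,5,6) assms(8)[unfolded t0], where e = "inverse (real (Suc m))"]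
      by force
    done
  then obtain Y where Y: "\<And>m. norm (fst (Y m)) = 1 \<and> \<bar>fst (snd (Y m)) - t0\<bar> < inverse (real (Suc m))
     \<and> \<bar>fst (snd (snd (Y m))) - t0\<bar> < inverse (real (Suc m))
     \<and> \<bar>fst (snd (snd (snd (Y m)))) - t0\<bar> < inverse (real (Suc m))
     \<and> \<bar>snd (snd (snd (snd (Y m)))) - t0\<bar> < inverse (real (Suc m))
     \<and> phi0 g (fst (Y m)) (fst (snd (Y m))) = 0 \<and> phi1 g (fst (Y m)) (fst (snd (snd (Y m)))) = 0
     \<and> phi2 g (fst (Y m)) (fst (snd (snd (snd (Y m))))) = 0 \<and> phi3 g (fst (Y m)) (snd (snd (snd (snd (Y m))))) = 0"
    by metis
  define X where "X m = fst (Y m)" for m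
  define \<xi>0 where "\<xi>0 m = fst (snd (Y m))" for m
  define \<xi>1 where "\<xi>1 m = fst (snd (snd (Y m)))" for m
  define \<xi>2 where "\<xi>2 m = fst (snd (snd (snd (Y m))))" for m
  define \<xi>3 where "\<xi>3 m = snd (snd (snd (snd (Y m))))" for m
  have Xs: "\<forall>m. X m \<in> sphere 0 1" using Y by (simp add: X_def)
  obtain l \<sigma> where l: "l \<in> sphere 0 1" "strict_mono \<sigma>" "(X \<circ> \<sigma>) \<longlonglongrightarrow> l"
    using seq_compactE[OF compact_imp_seq_compact[OF compact_sphere] Xs] by blast
  have lim_xi: "(\<lambda>m. \<xi> (\<sigma> m)) \<longlonglongrightarrow> t0" if h: "\<And>m. \<bar>\<xi> m - t0\<bar> < inverse (real (Suc m))" for \<xi>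
  proof (rule LIMSEQ_I)
    fix e :: real assume e: "e > 0"
    obtain M where M: "inverse (real (Suc M)) < e" using reals_Archimedean[OF e] by blast
    show "\<exists>no. \<forall>n\<ge>no. norm (\<xi> (\<sigma> n) - t0) < e"
    proof (intro exI allI impI)
      fix n assume n: "M \<le> n"
      have "M \<le> \<sigma> n" using seq_suble[OF l(2), of n] n by simp
      then have "inverse (real (Suc (\<sigma> n))) \<le> inverse (real (Suc M))"
        by (simp add: le_imp_inverse_le)
      then have "\<bar>\<xi> (\<sigma> n) - t0\<bar> < e" using h[of "\<sigma> n"] M by linarith
      then show "norm (\<xi> (\<sigma> n) - t0) < e" by simp
    qed
  qed
  have L0: "(\<lambda>m. \<xi>0 (\<sigma> m)) \<longlonglongrightarrow> t0" by (rule lim_xi) (use Y in \<open>simp add: \<xi>0_def\<close>)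
  have L1: "(\<lambda>m. \<xi>1 (\<sigma> m)) \<longlonglongrightarrow> t0" by (rule lim_xi) (use Y in \<open>simp add: \<xi>1_def\<close>)
  have L2: "(\<lambda>m. \<xi>2 (\<sigma> m)) \<longlonglongrightarrow> t0" by (rule lim_xi) (use Y in \<open>simp add: \<xi>2_def\<close>)
  have L3: "(\<lambda>m. \<xi>3 (\<sigma> m)) \<longlonglongrightarrow> t0" by (rule lim_xi) (use Y in \<open>simp add: \<xi>3_def\<close>)
  have LX: "(\<lambda>m. X (\<sigma> m)) \<longlonglongrightarrow> l" using l(3) by (simp add: comp_def)
  have LG: "\<And>k f. (f \<longlonglongrightarrow> t0) \<Longrightarrow> (\<lambda>m. G g k (f m)) \<longlonglongrightarrow> G g k t0"
    by (rule isCont_tendsto_compose[OF G_cont[OF sm]])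
  have LA: "(\<lambda>m. fst (X (\<sigma> m))) \<longlonglongrightarrow> fst l" by (intro tendsto_intros LX)
  have LB: "(\<lambda>m. fst (snd (X (\<sigma> m)))) \<longlonglongrightarrow> fst (snd l)" by (intro tendsto_intros LX)
  have LC: "(\<lambda>m. snd (snd (X (\<sigma> m)))) \<longlonglongrightarrow> snd (snd l)" by (intro tendsto_intros LX)
  have P0: "(\<lambda>m. phi0 g (X (\<sigma> m)) (\<xi>0 (\<sigma> m))) \<longlonglongrightarrow> phi0 g l t0"
    unfolding phi0_def by (intro tendsto_intros LA LB LC LG L0)
  have P1: "(\<lambda>m. phi1 g (X (\<sigma> m)) (\<xi>1 (\<sigma> m))) \<longlonglongrightarrow> phi1 g l t0"
    unfolding phi1_def by (intro tendsto_intros LA LB LC LG L1)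
  have P2: "(\<lambda>m. phi2 g (X (\<sigma> m)) (\<xi>2 (\<sigma> m))) \<longlonglongrightarrow> phi2 g l t0"
    unfolding phi2_def by (intro tendsto_intros LA LB LC LG L2)
  have P3: "(\<lambda>m. phi3 g (X (\<sigma> m)) (\<xi>3 (\<sigma> m))) \<longlonglongrightarrow> phi3 g l t0"
    unfolding phi3_def by (intro tendsto_intros LA LB LC LG L3)
  have Z0: "phi0 g l t0 = 0"
    using LIMSEQ_unique[OF P0] Y by (simp add: X_def \<xi>0_def)
  have Z1: "phi1 g l t0 = 0"
    using LIMSEQ_unique[OF P1] Y by (simp add: X_def \<xi>1_def)
  have Z2: "phi2 g l t0 = 0"
    using LIMSEQ_unique[OF P2] Y by (simp add: X_def \<xi>2_def)
  have Z3: "phi3 g l t0 = 0"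
    using LIMSEQ_unique[OF P3] Y by (simp add: X_def \<xi>3_def)
  have lnz: "fst l \<noteq> 0 \<or> fst (snd l) \<noteq> 0 \<or> snd (snd l) \<noteq> 0"
  proof (rule ccontr)
    assume "\<not> ?thesis"
    then have "l = 0" by (simp add: prod_eq_iff)
    then show False using l(1) by simp
  qed
  have G1ne: "G g 1 t0 \<noteq> 0" using sm unfolding smooth_jordan_param_def G_def nth1 by blast
  have "Im (cnj (G g 1 t0) * G g 3 t0) * Re (cnj (G g 1 t0) * G g 1 t0) - 3 * Im (cnj (G g 1 t0) * G g 2 t0) * Re (cnj (G g 1 t0) * G g 2 t0) = 0"
    by (rule alg_core[OF Z0[unfolded phi0_def] Z1[unfolded phi1_def] Z2[unfolded phi2_def] Z3[unfolded phi3_def] G1ne lnz])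
  then have "(curvature g has_real_derivative 0) (at t0)" by (rule curv_deriv[OF sm])
  then show ?thesis unfolding is_vertex_def using t0 by blast
qed


end
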